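(* Let $Z = (G, c)$ and $Z' = (G', c')$ be zonotopes in $\mathbb{R}^n$ with $G = [g_1, \dots, g_N]$ and $G' = [\alpha_1 g_1, \dots, \alpha_N g_N]$ for some $\alpha_1, \dots, \alpha_N \in [0,1]$ (i.e. $Z'$ is aligned with $Z$). Then $$Z \ominus Z' = \big([(1-\alpha_1) g_1, (1-\alpha_2) g_2, \dots, (1-\alpha_N) g_N], \, c - c'\big).$$
   Context: A zonotope with generator-representation $(G, c)$, where $G = [g_1, \dots, g_N] \in \mathbb{R}^{n \times N}$ and $c \in \mathbb{R}^n$, is the set $\{c + \sum_{i=1}^N \theta_i g_i \mid \theta_i \in [-1,1], i = 1, \dots, N\}$; it is denoted $(G, c)$. The Minkowski difference of sets $X, Y \subseteq \mathbb{R}^n$ is $X \ominus Y = \{z \in \mathbb{R}^n \mid z + Y \subseteq X\}$. *)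

theory Defs
  imports "HOL-Analysis.Analysis"
begin

definition zonotope :: "nat \<Rightarrow> (nat \<Rightarrow> real ^ 'n) \<Rightarrow> real ^ 'n \<Rightarrow> (real ^ 'n) set" where
  "zonotope N G c = {c + (\<Sum>i<N. \<theta> i *\<^sub>R G i) | \<theta>. \<forall>i<N. \<theta> i \<in> {-1..1}}"

definition minkowski_diff :: "('a::ab_group_add) set \<Rightarrow> 'a set \<Rightarrow> 'a set" where
  "minkowski_diff X Y = {z. (\<lambda>y. z + y) ` Y \<subseteq> X}"

end

theory Submission
  imports Defs
begin

lemma zonotope_Suc:
  "zonotope (Suc N) G c = (\<lambda>(x,t). x + t *\<^sub>R G N) ` (zonotope N G c \<times> {-1..1})"
proof
  show "zonotope (Suc N) G c \<subseteq> (\<lambda>(x,t). x + t *\<^sub>R G N) ` (zonotope N G c \<times> {-1..1})"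
  proof
    fix z assume "z \<in> zonotope (Suc N) G c"
    then obtain \<theta> where th: "\<forall>i<Suc N. \<theta> i \<in> {-1..1}" and z: "z = c + (\<Sum>i<Suc N. \<theta> i *\<^sub>R G i)"
      unfolding zonotope_def by blast
    have "c + (\<Sum>i<N. \<theta> i *\<^sub>R G i) \<in> zonotope N G c"
      unfolding zonotope_def using th by auto
    moreover have "\<theta> N \<in> {-1..1}" using th by auto
    moreover have "z = (c + (\<Sum>i<N. \<theta> i *\<^sub>R G i)) + \<theta> N *\<^sub>R G N" using z by (simp add: add.assoc)
    ultimately show "z \<in> (\<lambda>(x,t). x + t *\<^sub>R G N) ` (zonotope N G c \<times> {-1..1})"
      by (auto intro!: image_eqI[where x="(c + (\<Sum>i<N. \<theta> i *\<^sub>R G i), \<theta> N)"])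
  qed
next
  show "(\<lambda>(x,t). x + t *\<^sub>R G N) ` (zonotope N G c \<times> {-1..1}) \<subseteq> zonotope (Suc N) G c"
  proof clarify
    fix x t assume x: "x \<in> zonotope N G c" and t: "t \<in> {-1..(1::real)}"
    then obtain \<theta> where th: "\<forall>i<N. \<theta> i \<in> {-1..1}" and xe: "x = c + (\<Sum>i<N. \<theta> i *\<^sub>R G i)"
      unfolding zonotope_def by blast
    define \<theta>' where "\<theta>' = \<theta>(N := t)"
    have "(\<Sum>i<N. \<theta>' i *\<^sub>R G i) = (\<Sum>i<N. \<theta> i *\<^sub>R G i)"
      by (rule sum.cong) (auto simp: \<theta>'_def)
    hence "x + t *\<^sub>R G N = c + (\<Sum>i<Suc N. \<theta>' i *\<^sub>R G i)"
      using xe by (simp add: \<theta>'_def add.assoc)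
    moreover have "\<forall>i<Suc N. \<theta>' i \<in> {-1..1}" using th t by (auto simp: \<theta>'_def less_Suc_eq)
    ultimately show "x + t *\<^sub>R G N \<in> zonotope (Suc N) G c" unfolding zonotope_def by blast
  qed
qed

lemma zonotope_compact: "compact (zonotope N G c)"
proof (induction N)
  case 0
  then show ?case by (simp add: zonotope_def)
next
  case (Suc N)
  show ?case unfolding zonotope_Suc
    by (rule compact_continuous_image) (auto intro!: continuous_intros compact_Times Suc simp: case_prod_beta)
qed

lemma zonotope_convex: "convex (zonotope N G c)"
  unfolding convex_def
proof (intro ballI allI impI)
  fix x y and u v :: real
  assume "x \<in> zonotope N G c" "y \<in> zonotope N G c" and u: "0 \<le> u" and v: "0 \<le> v" and uv: "u + v = 1"
  then obtain \<theta> \<phi> where th: "\<forall>i<N. \<theta> i \<in> {-1..1}" and ph: "\<forall>i<N. \<phi> i \<in> {-1..1}"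
    and xe: "x = c + (\<Sum>i<N. \<theta> i *\<^sub>R G i)" and ye: "y = c + (\<Sum>i<N. \<phi> i *\<^sub>R G i)"
    unfolding zonotope_def by blast
  define \<psi> where "\<psi> i = u * \<theta> i + v * \<phi> i" for i
  have "\<forall>i<N. \<psi> i \<in> {-1..1}"
  proof (intro allI impI)
    fix i assume "i < N"
    hence a: "-1 \<le> \<theta> i" "\<theta> i \<le> 1" "-1 \<le> \<phi> i" "\<phi> i \<le> 1" using th ph by auto
    have "u * (-1) \<le> u * \<theta> i" "u * \<theta> i \<le> u * 1" "v * (-1) \<le> v * \<phi> i" "v * \<phi> i \<le> v * 1"
      by (rule mult_left_mono; use a u v in simp)+
    thus "\<psi> i \<in> {-1..1}" using uv by (auto simp: \<psi>_def)
  qed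
  moreover have "u *\<^sub>R (c + (\<Sum>i<N. \<theta> i *\<^sub>R G i)) + v *\<^sub>R (c + (\<Sum>i<N. \<phi> i *\<^sub>R G i))
      = c + (\<Sum>i<N. \<psi> i *\<^sub>R G i)"
  proof -
    have "u *\<^sub>R (c + (\<Sum>i<N. \<theta> i *\<^sub>R G i)) + v *\<^sub>R (c + (\<Sum>i<N. \<phi> i *\<^sub>R G i))
       = (u + v) *\<^sub>R c + (\<Sum>i<N. (u * \<theta> i + v * \<phi> i) *\<^sub>R G i)"
      by (simp add: scaleR_add_right scaleR_sum_right sum.distrib scaleR_add_left algebra_simps)
    thus ?thesis using uv by (simp add: \<psi>_def)
  qed
  ultimately show "u *\<^sub>R x + v *\<^sub>R y
      \<in> zonotope N G c" unfolding zonotope_def xe ye by blast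
qed

theorem proposition3:
  fixes N :: nat and G :: "nat \<Rightarrow> real ^ 'n" and c c' :: "real ^ 'n"
    and \<alpha> :: "nat \<Rightarrow> real"
  assumes "\<forall>i<N. \<alpha> i \<in> {0..1}"
  shows "minkowski_diff (zonotope N G c) (zonotope N (\<lambda>i. \<alpha> i *\<^sub>R G i) c')
           = zonotope N (\<lambda>i. (1 - \<alpha> i) *\<^sub>R G i) (c - c')"
proof
  show "zonotope N (\<lambda>i. (1 - \<alpha> i) *\<^sub>R G i) (c - c') \<subseteq> minkowski_diff (zonotope N G c) (zonotope N (\<lambda>i. \<alpha> i *\<^sub>R G i) c')"
    unfolding minkowski_diff_def
  proof (rule subsetI, unfold mem_Collect_eq, rule image_subsetI)
    fix z w assume "z \<in> zonotope N (\<lambda>i. (1 - \<alpha> i) *\<^sub>R G i) (c - c')"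
       "w \<in> zonotope N (\<lambda>i. \<alpha> i *\<^sub>R G i) c'"
    then obtain \<theta> \<phi> where th: "\<forall>i<N. \<theta> i \<in> {-1..1}" and ph: "\<forall>i<N. \<phi> i \<in> {-1..1}"
      and ze: "z = c - c' + (\<Sum>i<N. \<theta> i *\<^sub>R (1 - \<alpha> i) *\<^sub>R G i)"
      and we: "w = c' + (\<Sum>i<N. \<phi> i *\<^sub>R \<alpha> i *\<^sub>R G i)"
      unfolding zonotope_def by blast
    define \<psi> where "\<psi> i = (1 - \<alpha> i) * \<theta> i + \<alpha> i * \<phi> i" for i
    have "\<forall>i<N. \<psi> i \<in> {-1..1}"
    proof (intro allI impI)
      fix i assume "i < N"
      hence a: "-1 \<le> \<theta> i" "\<theta> i \<le> 1" "-1 \<le> \<phi> i" "\<phi> i \<le> 1" "0 \<le> \<alpha> i" "\<alpha> i \<le> 1"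
        using th ph assms by auto
      have "(1 - \<alpha> i) * (-1) \<le> (1 - \<alpha> i) * \<theta> i" "(1 - \<alpha> i) * \<theta> i \<le> (1 - \<alpha> i) * 1"
           "\<alpha> i * (-1) \<le> \<alpha> i * \<phi> i" "\<alpha> i * \<phi> i \<le> \<alpha> i * 1"
        by (rule mult_left_mono; use a in simp)+
      thus "\<psi> i \<in> {-1..1}" by (auto simp: \<psi>_def)
    qed
    moreover have "c - c' + (\<Sum>i<N. \<theta> i *\<^sub>R (1 - \<alpha> i) *\<^sub>R G i) + (c' + (\<Sum>i<N. \<phi> i *\<^sub>R \<alpha> i *\<^sub>R G i))
        = c + (\<Sum>i<N. \<psi> i *\<^sub>R G i)"
    proof -
      have "(\<Sum>i<N. \<theta> i *\<^sub>R (1 - \<alpha> i) *\<^sub>R G i) + (\<Sum>i<N. \<phi> i *\<^sub>R \<alpha> i *\<^sub>R G i)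
          = (\<Sum>i<N. \<psi> i *\<^sub>R G i)"
        by (simp add: \<psi>_def sum.distrib[symmetric] scaleR_add_left mult.commute)
      thus ?thesis by (simp add: algebra_simps)
    qed
    ultimately show "z + w
        \<in> zonotope N G c" unfolding zonotope_def ze we by blast
  qed
next
  show "minkowski_diff (zonotope N G c) (zonotope N (\<lambda>i. \<alpha> i *\<^sub>R G i) c') \<subseteq> zonotope N (\<lambda>i. (1 - \<alpha> i) *\<^sub>R G i) (c - c')"
  proof
    fix z assume zm: "z \<in> minkowski_diff (zonotope N G c) (zonotope N (\<lambda>i. \<alpha> i *\<^sub>R G i) c')"
    let ?R = "zonotope N (\<lambda>i. (1 - \<alpha> i) *\<^sub>R G i) (c - c')"
    show "z \<in> ?R"
    proof (rule ccontr)
      assume "z \<notin> ?R"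
      then obtain a b where ab: "inner a z < b" and ax: "\<forall>x\<in>?R. inner a x > b"
        using separating_hyperplane_closed_point[OF zonotope_convex compact_imp_closed[OF zonotope_compact]]
        by blast
      define s where "s i = sgn (inner a (G i))" for i
      have s1: "s i \<in> {-1..1}" for i by (auto simp: s_def sgn_if)
      have sa: "s i * inner a (G i) = \<bar>inner a (G i)\<bar>" for i by (simp add: s_def sgn_if)
      define r where "r = c - c' + (\<Sum>i<N. (- s i) *\<^sub>R (1 - \<alpha> i) *\<^sub>R G i)"
      have "r \<in> ?R" unfolding r_def zonotope_def using s1 by fastforce
      hence rb: "inner a r > b" using ax by blast
      have ra: "inner a r = inner a (c - c') - (\<Sum>i<N. (1 - \<alpha> i) * \<bar>inner a (G i)\<bar>)"
      proof -
        have "inner a r = inner a (c - c') + (\<Sum>i<N. (- s i) * ((1 - \<alpha> i) * inner a (G i)))"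
          unfolding r_def by (simp add: inner_sum_right inner_add_right mult.assoc)
        also have "(\<Sum>i<N. (- s i) * ((1 - \<alpha> i) * inner a (G i))) = - (\<Sum>i<N. (1 - \<alpha> i) * \<bar>inner a (G i)\<bar>)"
          by (simp add: sum_negf[symmetric] sa[symmetric] mult.left_commute)
        finally show ?thesis by simp
      qed
      define y where "y = c' + (\<Sum>i<N. (- s i) *\<^sub>R \<alpha> i *\<^sub>R G i)"
      have "y \<in> zonotope N (\<lambda>i. \<alpha> i *\<^sub>R G i) c'" unfolding y_def zonotope_def using s1 by fastforce
      hence "z + y \<in> zonotope N G c" using zm unfolding minkowski_diff_def by blast
      then obtain \<theta> where th: "\<forall>i<N. \<theta> i \<in> {-1..1}" and zy: "z + y = c + (\<Sum>i<N. \<theta> i *\<^sub>R G i)"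
        unfolding zonotope_def by blast
      have "z = c - c' + (\<Sum>i<N. \<theta> i *\<^sub>R G i) + (\<Sum>i<N. s i *\<^sub>R \<alpha> i *\<^sub>R G i)"
        using zy unfolding y_def by (simp add: sum_negf algebra_simps)
      hence "inner a z = inner a (c - c' + (\<Sum>i<N. \<theta> i *\<^sub>R G i) + (\<Sum>i<N. s i *\<^sub>R \<alpha> i *\<^sub>R G i))"
        by simp
      also have "\<dots> = inner a (c - c') + (\<Sum>i<N. \<theta> i * inner a (G i)) + (\<Sum>i<N. \<alpha> i * (s i * inner a (G i)))"
        by (simp add: inner_sum_right inner_add_right mult.left_commute mult.commute)
      finally have za: "inner a z = inner a (c - c') + (\<Sum>i<N. \<theta> i * inner a (G i)) + (\<Sum>i<N. \<alpha> i * \<bar>inner a (G i)\<bar>)"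
        by (simp add: sa)
      have "(\<Sum>i<N. - \<bar>inner a (G i)\<bar>) \<le> (\<Sum>i<N. \<theta> i * inner a (G i))"
      proof (rule sum_mono)
        fix i assume "i \<in> {..<N}"
        hence "\<bar>\<theta> i\<bar> \<le> 1" using th by auto
        hence "\<bar>\<theta> i * inner a (G i)\<bar> \<le> \<bar>inner a (G i)\<bar>"
          by (simp add: abs_mult mult_left_le_one_le)
        thus "- \<bar>inner a (G i)\<bar> \<le> \<theta> i * inner a (G i)" by linarith
      qed
      hence "inner a r \<le> inner a z"
        unfolding ra za by (simp add: sum_subtractf sum_negf left_diff_distrib)
      thus False using ab rb by linarith
    qed
  qed
qed

end
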